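(* Suppose $0<p<1$ and $q>0$, and let $(S,I)$ be an endemic equilibrium. Then $$I_{\max}\le\Big[\Big(\frac\beta\gamma\Big)_{\max}S_{\max}^q\Big]^{\frac1{1-p}}\qquad\text{and}\qquad S_{\max}\le\big[r_{\max}I_{\max}^{1-p}\big]^{1/q}.$$
   Context: Let $\Omega\subset\mathbb R^n$ be a bounded domain with smooth boundary and $\nu$ the outward unit normal on $\partial\Omega$. Let $\beta,\gamma$ be positive Hölder continuous functions on $\bar\Omega$, $N>0$, $q>0$, $0<p<1$, and $d_S,d_I>0$. Consider the system $$d_S\Delta S-\beta S^qI^p+\gamma I=0,\quad d_I\Delta I+\beta S^qI^p-\gamma I=0\ \text{ in }\Omega,\qquad \partial_\nu S=\partial_\nu I=0\ \text{ on }\partial\Omega,\qquad \int_\Omega(S+I)=N.$$ An endemic equilibrium is a nonnegative classical solution $(S,I)$ with $I\not\equiv0$. Define $r=\gamma/\beta$; for continuous $f$ on $\bar\Omega$, $f_{\max}=\max_{\bar\Omega}f$. *)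

theory Defs
  imports "HOL-Analysis.Analysis"
begin

definition partial :: "('a::euclidean_space \<Rightarrow> real) \<Rightarrow> 'a \<Rightarrow> 'a \<Rightarrow> real" where
  "partial f b x = frechet_derivative f (at x) b"

fun Ck_on :: "nat \<Rightarrow> 'a::euclidean_space set \<Rightarrow> ('a \<Rightarrow> real) \<Rightarrow> bool" where
  "Ck_on 0 S f = continuous_on S f"
| "Ck_on (Suc k) S f =
     ((\<forall>x\<in>S. f differentiable (at x)) \<and> (\<forall>b\<in>Basis. Ck_on k S (partial f b)))"

definition smooth_on :: "'a::euclidean_space set \<Rightarrow> ('a \<Rightarrow> real) \<Rightarrow> bool" where
  "smooth_on S f \<longleftrightarrow> (\<forall>k. Ck_on k S f)"

definition grad :: "('a::euclidean_space \<Rightarrow> real) \<Rightarrow> 'a \<Rightarrow> 'a" where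
  "grad f x = (\<Sum>b\<in>Basis. partial f b x *\<^sub>R b)"

definition laplacian :: "('a::euclidean_space \<Rightarrow> real) \<Rightarrow> 'a \<Rightarrow> real" where
  "laplacian f x = (\<Sum>b\<in>Basis. partial (partial f b) b x)"

text \<open>Bounded domain with smooth boundary, described by a smooth global
  defining function phi: Omega = {phi < 0}, with grad phi nonzero on {phi = 0}
  (which is then the boundary).\<close>
definition smooth_bounded_domain :: "'a::euclidean_space set \<Rightarrow> ('a \<Rightarrow> real) \<Rightarrow> bool" where
  "smooth_bounded_domain \<Omega> \<phi> \<longleftrightarrow>
     open \<Omega> \<and> connected \<Omega> \<and> bounded \<Omega> \<and> \<Omega> \<noteq> {} \<and>
     smooth_on UNIV \<phi> \<and> \<Omega> = {x. \<phi> x < 0} \<and> frontier \<Omega> = {x. \<phi> x = 0} \<and>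
     (\<forall>x. \<phi> x = 0 \<longrightarrow> grad \<phi> x \<noteq> 0)"

definition outward_normal :: "('a::euclidean_space \<Rightarrow> real) \<Rightarrow> 'a \<Rightarrow> 'a" where
  "outward_normal \<phi> x = (1 / norm (grad \<phi> x)) *\<^sub>R grad \<phi> x"

definition C1_closure :: "'a::euclidean_space set \<Rightarrow> ('a \<Rightarrow> real) \<Rightarrow> bool" where
  "C1_closure \<Omega> f \<longleftrightarrow>
     (\<forall>x\<in>closure \<Omega>. f differentiable (at x within closure \<Omega>)) \<and>
     (\<forall>b\<in>Basis. continuous_on (closure \<Omega>)
                  (\<lambda>x. frechet_derivative f (at x within closure \<Omega>) b))"

definition normal_deriv :: "'a::euclidean_space set \<Rightarrow> ('a \<Rightarrow> real) \<Rightarrow> ('a \<Rightarrow> real) \<Rightarrow> 'a \<Rightarrow> real" where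
  "normal_deriv \<Omega> \<phi> f x = frechet_derivative f (at x within closure \<Omega>) (outward_normal \<phi> x)"

definition holder_continuous_on :: "'a::euclidean_space set \<Rightarrow> ('a \<Rightarrow> real) \<Rightarrow> bool" where
  "holder_continuous_on S f \<longleftrightarrow>
     (\<exists>\<alpha> C. 0 < \<alpha> \<and> \<alpha> \<le> 1 \<and> (\<forall>x\<in>S. \<forall>y\<in>S. \<bar>f x - f y\<bar> \<le> C * dist x y powr \<alpha>))"

definition fmax :: "'a::euclidean_space set \<Rightarrow> ('a \<Rightarrow> real) \<Rightarrow> real" where
  "fmax \<Omega> f = Sup (f ` closure \<Omega>)"

definition endemic_equilibrium ::
  "'a::euclidean_space set \<Rightarrow> ('a \<Rightarrow> real) \<Rightarrow> real \<Rightarrow> real \<Rightarrow> ('a \<Rightarrow> real) \<Rightarrow> ('a \<Rightarrow> real)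
     \<Rightarrow> real \<Rightarrow> real \<Rightarrow> real \<Rightarrow> ('a \<Rightarrow> real) \<Rightarrow> ('a \<Rightarrow> real) \<Rightarrow> bool" where
  "endemic_equilibrium \<Omega> \<phi> dS dI \<beta> \<gamma> N p q S I \<longleftrightarrow>
     Ck_on 2 \<Omega> S \<and> Ck_on 2 \<Omega> I \<and> C1_closure \<Omega> S \<and> C1_closure \<Omega> I \<and>
     (\<forall>x\<in>closure \<Omega>. S x \<ge> 0 \<and> I x \<ge> 0) \<and> (\<exists>x\<in>closure \<Omega>. I x \<noteq> 0) \<and>
     (\<forall>x\<in>\<Omega>. dS * laplacian S x - \<beta> x * S x powr q * I x powr p + \<gamma> x * I x = 0) \<and>
     (\<forall>x\<in>\<Omega>. dI * laplacian I x + \<beta> x * S x powr q * I x powr p - \<gamma> x * I x = 0) \<and>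
     (\<forall>x\<in>frontier \<Omega>. normal_deriv \<Omega> \<phi> S x = 0 \<and> normal_deriv \<Omega> \<phi> I x = 0) \<and>
     ((\<lambda>x. S x + I x) has_integral N) \<Omega>"

end

theory Submission
  imports Defs
begin


lemma second_deriv_max:
  fixes g g1 :: "real \<Rightarrow> real"
  assumes "\<delta> > 0" "\<forall>t. \<bar>t\<bar> < \<delta> \<longrightarrow> g t \<le> g 0"
    "\<forall>t. \<bar>t\<bar> < \<delta> \<longrightarrow> (g has_real_derivative g1 t) (at t)"
    "(g1 has_real_derivative d) (at 0)"
  shows "d \<le> 0"
proof (rule ccontr)
  assume "\<not> d \<le> 0"
  hence dpos: "d > 0" by simp
  have g10: "g1 0 = 0"
  proof -
    have "(g has_real_derivative g1 0) (at 0)" using assms(1,3) by auto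
    moreover have "\<forall>y. \<bar>0 - y\<bar> < \<delta> \<longrightarrow> g y \<le> g 0" using assms(2) by auto
    ultimately show ?thesis using DERIV_local_max assms(1) by blast
  qed
  obtain d' where d': "d' > 0" "\<forall>h>0. h < d' \<longrightarrow> g1 0 < g1 (0 + h)"
    using DERIV_pos_inc_right[OF assms(4) dpos] by blast
  define t where "t = min d' \<delta> / 2"
  have t: "0 < t" "t < d'" "t < \<delta>" using d' assms(1) by (auto simp: t_def)
  have "\<forall>x. 0 \<le> x \<and> x \<le> t \<longrightarrow> (g has_real_derivative g1 x) (at x)"
    using assms(3) t by auto
  then obtain z where z: "0 < z" "z < t" "g t - g 0 = (t - 0) * g1 z"
    using MVT2[of 0 t g g1] t by blast
  have "g1 z > 0" using d' z t g10 by auto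
  hence "g t - g 0 > 0" using z t by simp
  moreover have "g t \<le> g 0" using assms(2) t by auto
  ultimately show False by simp
qed

lemma Ck_on_2: "Ck_on 2 S f \<longleftrightarrow> (\<forall>x\<in>S. f differentiable (at x)) \<and>
   (\<forall>b\<in>Basis. (\<forall>x\<in>S. partial f b differentiable (at x)) \<and>
      (\<forall>b'\<in>Basis. continuous_on S (partial (partial f b) b')))"
  by (simp add: numeral_2_eq_2)

lemma ck2_D2:
  fixes u :: "'a::euclidean_space \<Rightarrow> real"
  assumes "open U" "Ck_on 2 U u" "z \<in> U" "b \<in> Basis"
  shows "\<exists>\<delta>>0. (\<forall>t. \<bar>t\<bar> < \<delta> \<longrightarrow>
      ((\<lambda>s. u (z + s *\<^sub>R b)) has_real_derivative partial u b (z + t *\<^sub>R b)) (at t)) \<and>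
    ((\<lambda>t. partial u b (z + t *\<^sub>R b)) has_real_derivative partial (partial u b) b z) (at 0)"
proof -
  obtain \<delta> where d: "\<delta> > 0" "ball z \<delta> \<subseteq> U" using assms(1,3) open_contains_ball by blast
  have diff: "\<forall>x\<in>U. u differentiable (at x)" and diff2: "\<forall>x\<in>U. partial u b differentiable (at x)"
    using assms(2,4) by (auto simp: Ck_on_2)
  have nb: "norm b = 1" using assms(4) by simp
  have lin: "\<And>D. linear D \<Longrightarrow> (\<lambda>s. D (s *\<^sub>R b)) = (*) (D b)"
    by (auto simp: linear_scale mult.commute)
  have path: "\<And>t. ((\<lambda>s. z + s *\<^sub>R b) has_derivative (\<lambda>s. s *\<^sub>R b)) (at t)"
    by (auto intro!: derivative_eq_intros)
  have A: "((\<lambda>s. u (z + s *\<^sub>R b)) has_real_derivative partial u b (z + t *\<^sub>R b)) (at t)"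
    if "\<bar>t\<bar> < \<delta>" for t
  proof -
    have "z + t *\<^sub>R b \<in> U" using d that nb by (auto simp: dist_norm intro!: subsetD[OF d(2)])
    hence "(u has_derivative frechet_derivative u (at (z + t *\<^sub>R b))) (at (z + t *\<^sub>R b))"
      using diff frechet_derivative_works by blast
    from diff_chain_at[OF path this]
    have "((\<lambda>s. u (z + s *\<^sub>R b)) has_derivative (\<lambda>s. frechet_derivative u (at (z + t *\<^sub>R b)) (s *\<^sub>R b))) (at t)"
      by (simp add: o_def)
    moreover have "linear (frechet_derivative u (at (z + t *\<^sub>R b)))"
      using \<open>(u has_derivative _) _\<close> has_derivative_linear by blast
    ultimately show ?thesis unfolding has_field_derivative_def partial_def using lin by metis
  qed
  have B: "((\<lambda>t. partial u b (z + t *\<^sub>R b)) has_real_derivative partial (partial u b) b z) (at 0)"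
  proof -
    have "(partial u b has_derivative frechet_derivative (partial u b) (at z)) (at z)"
      using diff2 assms(3) frechet_derivative_works by blast
    hence "(partial u b has_derivative frechet_derivative (partial u b) (at z)) (at (z + 0 *\<^sub>R b))" by simp
    from diff_chain_at[OF path this]
    have "((\<lambda>s. partial u b (z + s *\<^sub>R b)) has_derivative (\<lambda>s. frechet_derivative (partial u b) (at z) (s *\<^sub>R b))) (at 0)"
      by (simp add: o_def)
    moreover have "linear (frechet_derivative (partial u b) (at z))"
      using \<open>(partial u b has_derivative _) (at z)\<close> has_derivative_linear by blast
    ultimately show ?thesis unfolding has_field_derivative_def partial_def[of "partial u b"] using lin by metis
  qed
  show ?thesis using A B d(1) by blast
qed



lemma norm_line_sq:
  fixes x b :: "'a::euclidean_space"
  assumes "b \<in> Basis"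
  shows "(norm (x + s *\<^sub>R b))\<^sup>2 = (norm x)\<^sup>2 + 2 * s * inner x b + s\<^sup>2"
proof -
  have bb: "inner b b = 1" using assms by simp
  have "(norm (x + s *\<^sub>R b))\<^sup>2 = inner (x + s *\<^sub>R b) (x + s *\<^sub>R b)" by (rule power2_norm_eq_inner)
  also have "\<dots> = inner x x + 2 * s * inner x b + s\<^sup>2 * inner b b"
    by (simp add: inner_add_left inner_add_right inner_commute algebra_simps power2_eq_square)
  also have "\<dots> = (norm x)\<^sup>2 + 2 * s * inner x b + s\<^sup>2" using bb by (simp add: power2_norm_eq_inner)
  finally show ?thesis .
qed

lemma sum_inner_sq:
  fixes x :: "'a::euclidean_space"
  shows "(\<Sum>b\<in>Basis. (inner x b)\<^sup>2) = (norm x)\<^sup>2"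
  by (subst power2_norm_eq_inner, subst euclidean_inner) (simp add: power2_eq_square)

lemma barrier_D2:
  fixes z y b :: "'a::euclidean_space"
  assumes "b \<in> Basis"
  defines "P \<equiv> (norm (z - y))\<^sup>2" and "Q \<equiv> inner (z - y) b"
  shows "\<forall>t. ((\<lambda>s. exp (- \<alpha> * (norm (z + s *\<^sub>R b - y))\<^sup>2) - C) has_real_derivative
            exp (- \<alpha> * (P + 2 * t * Q + t\<^sup>2)) * (- \<alpha> * (2 * Q + 2 * t))) (at t)"
    "((\<lambda>t. exp (- \<alpha> * (P + 2 * t * Q + t\<^sup>2)) * (- \<alpha> * (2 * Q + 2 * t))) has_real_derivative
            exp (- \<alpha> * P) * (4 * \<alpha>\<^sup>2 * Q\<^sup>2 - 2 * \<alpha>)) (at 0)"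
proof -
  have eq: "(\<lambda>s. exp (- \<alpha> * (norm (z + s *\<^sub>R b - y))\<^sup>2) - C) =
        (\<lambda>s. exp (- \<alpha> * (P + 2 * s * Q + s\<^sup>2)) - C)"
  proof
    fix s
    have "z + s *\<^sub>R b - y = (z - y) + s *\<^sub>R b" by simp
    thus "exp (- \<alpha> * (norm (z + s *\<^sub>R b - y))\<^sup>2) - C = exp (- \<alpha> * (P + 2 * s * Q + s\<^sup>2)) - C"
      by (subst \<open>z + s *\<^sub>R b - y = (z - y) + s *\<^sub>R b\<close>, subst norm_line_sq[OF assms(1)]) (simp add: P_def Q_def)
  qed
  show "\<forall>t. ((\<lambda>s. exp (- \<alpha> * (norm (z + s *\<^sub>R b - y))\<^sup>2) - C) has_real_derivative
            exp (- \<alpha> * (P + 2 * t * Q + t\<^sup>2)) * (- \<alpha> * (2 * Q + 2 * t))) (at t)"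
  proof
    fix t
    show "((\<lambda>s. exp (- \<alpha> * (norm (z + s *\<^sub>R b - y))\<^sup>2) - C) has_real_derivative
            exp (- \<alpha> * (P + 2 * t * Q + t\<^sup>2)) * (- \<alpha> * (2 * Q + 2 * t))) (at t)"
      unfolding eq
      by (rule derivative_eq_intros refl | simp)+
  qed
  show "((\<lambda>t. exp (- \<alpha> * (P + 2 * t * Q + t\<^sup>2)) * (- \<alpha> * (2 * Q + 2 * t))) has_real_derivative
            exp (- \<alpha> * P) * (4 * \<alpha>\<^sup>2 * Q\<^sup>2 - 2 * \<alpha>)) (at 0)"
    by (rule derivative_eq_intros refl | simp)+ (simp add: algebra_simps power2_eq_square)
qed



lemma exp_diff_lower:
  fixes a b :: real
  shows "exp a - exp b \<ge> exp b * (a - b)"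
proof -
  have "exp a = exp b * exp (a - b)" by (simp add: exp_diff)
  moreover have "exp (a - b) \<ge> 1 + (a - b)" by (rule exp_ge_add_one_self)
  ultimately have "exp a \<ge> exp b * (1 + (a - b))" by (simp add: mult_left_mono)
  thus ?thesis by (simp add: algebra_simps)
qed

lemma hopf:
  fixes u :: "'a::euclidean_space \<Rightarrow> real" and D2 :: "'a \<Rightarrow> 'a \<Rightarrow> real"
  assumes R: "R > 0" and x0: "norm (x0 - y) = R"
    and cont: "continuous_on (cball y R) u"
    and less: "\<forall>z\<in>ball y R. u z < u x0"
    and c: "c \<ge> 0"
    and D2: "\<forall>z\<in>ball y R. \<forall>b\<in>Basis. \<exists>\<delta>>0. \<exists>g1. (\<forall>t. \<bar>t\<bar> < \<delta> \<longrightarrow>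
               ((\<lambda>s. u (z + s *\<^sub>R b)) has_real_derivative g1 t) (at t)) \<and>
               (g1 has_real_derivative D2 z b) (at 0)"
    and lap: "\<forall>z\<in>ball y R. (\<Sum>b\<in>Basis. D2 z b) \<ge> c * (u z - u x0)"
  shows "\<exists>\<kappa>>0. \<exists>\<tau>>0. \<forall>t. 0 < t \<and> t < \<tau> \<longrightarrow>
           u (x0 + t *\<^sub>R ((1 / R) *\<^sub>R (y - x0))) \<le> u x0 - \<kappa> * t"
proof -
  define M where "M = u x0"
  have uleM: "u z \<le> M" if "z \<in> cball y R" for z
  proof -
    have "continuous_on (closure (ball y R)) u" using cont R by simp
    moreover have "z \<in> closure (ball y R)" using that R by simp
    moreover have "\<And>x. x \<in> ball y R \<Longrightarrow> u x \<le> M" using less by (auto simp: M_def less_imp_le)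
    ultimately show ?thesis
      by (rule continuous_le_on_closure)
  qed
  define Sp where "Sp = sphere y (R / 2)"
  obtain b0 :: 'a where b0: "b0 \<in> Basis" using nonempty_Basis by blast
  have SpB: "Sp \<subseteq> ball y R" using R by (auto simp: Sp_def)
  have Spne: "Sp \<noteq> {}"
  proof -
    have "y + (R / 2) *\<^sub>R b0 \<in> Sp" using b0 R by (simp add: Sp_def dist_norm)
    thus ?thesis by blast
  qed
  have "continuous_on Sp u" using SpB ball_subset_cball by (blast intro: continuous_on_subset[OF cont])
  then obtain zm where zm: "zm \<in> Sp" "\<forall>z\<in>Sp. u z \<le> u zm"
    using continuous_attains_sup[of Sp u] Spne by (auto simp: Sp_def)
  define \<eta> where "\<eta> = M - u zm"
  have eta: "\<eta> > 0" using less zm SpB by (auto simp: \<eta>_def M_def)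
  have uSp: "u z \<le> M - \<eta>" if "z \<in> Sp" for z using zm that by (simp add: \<eta>_def)
  define n where "n = real DIM('a)"
  define \<alpha> where "\<alpha> = (2 * n + c + 1) / R\<^sup>2 + 1"
  have a1: "\<alpha> \<ge> 1" using c R by (simp add: \<alpha>_def n_def)
  have aR: "\<alpha> * R\<^sup>2 \<ge> 2 * n + c + 1"
  proof -
    have "\<alpha> * R\<^sup>2 = 2 * n + c + 1 + R\<^sup>2" using R by (simp add: \<alpha>_def field_simps)
    thus ?thesis by simp
  qed
  define v where "v z = exp (- \<alpha> * (norm (z - y))\<^sup>2) - exp (- \<alpha> * R\<^sup>2)" for z
  define w where "w z = u z + \<eta> * v z" for z
  define A where "A = cball y R - ball y (R / 2)"
  have Acomp: "compact A" unfolding A_def by (intro compact_diff) auto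
  have AsubC: "A \<subseteq> cball y R" by (auto simp: A_def)
  have x0A: "x0 \<in> A" using x0 R by (auto simp: A_def dist_norm norm_minus_commute)
  have vcont: "continuous_on UNIV v" unfolding v_def by (intro continuous_intros)
  have wcont: "continuous_on A w" unfolding w_def
    by (intro continuous_intros continuous_on_subset[OF cont AsubC] continuous_on_subset[OF vcont]) auto
  obtain zs where zs: "zs \<in> A" "\<forall>z\<in>A. w z \<le> w zs"
    using continuous_attains_sup[OF Acomp _ wcont] x0A by blast
  have wmax: "w zs \<le> M"
  proof (rule ccontr)
    assume "\<not> w zs \<le> M"
    hence big: "w zs > M" by simp
    define r where "r = norm (zs - y)"
    have r: "R / 2 \<le> r" "r \<le> R" using zs(1) by (auto simp: A_def r_def dist_norm norm_minus_commute)
    have "r \<noteq> R"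
    proof
      assume "r = R"
      hence "v zs = 0" by (simp add: v_def r_def)
      hence "w zs = u zs" by (simp add: w_def)
      thus False using uleM[of zs] zs(1) AsubC big by auto
    qed
    moreover have "r \<noteq> R / 2"
    proof
      assume "r = R / 2"
      hence "zs \<in> Sp" by (simp add: Sp_def r_def dist_norm norm_minus_commute)
      hence "u zs \<le> M - \<eta>" by (rule uSp)
      moreover have "v zs \<le> 1"
      proof -
        have "- \<alpha> * (norm (zs - y))\<^sup>2 \<le> 0" using a1 by simp
        hence "exp (- \<alpha> * (norm (zs - y))\<^sup>2) \<le> 1" by simp
        moreover have "exp (- \<alpha> * R\<^sup>2) > 0" by simp
        ultimately show ?thesis unfolding v_def by linarith
      qed
      moreover have "\<eta> * v zs \<le> \<eta> * 1" using \<open>v zs \<le> 1\<close> eta by (intro mult_left_mono) auto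
      ultimately have "w zs \<le> M" unfolding w_def by linarith
      thus False using big by simp
    qed
    ultimately have r2: "R / 2 < r" "r < R" using r by auto
    define \<rho> where "\<rho> = min (r - R / 2) (R - r)"
    have rho: "\<rho> > 0" using r2 by (simp add: \<rho>_def)
    have ballA: "ball zs \<rho> \<subseteq> A"
    proof
      fix x assume "x \<in> ball zs \<rho>"
      hence "norm (x - zs) < \<rho>" by (simp add: dist_norm norm_minus_commute)
      moreover have "norm (x - y) \<le> norm (x - zs) + r"
        using norm_triangle_ineq[of "x - zs" "zs - y"] by (simp add: r_def)
      moreover have "r \<le> norm (x - zs) + norm (x - y)"
        using norm_triangle_ineq[of "zs - x" "x - y"] by (simp add: r_def norm_minus_commute)
      ultimately show "x \<in> A" unfolding A_def \<rho>_def
        by (auto simp: dist_norm norm_minus_commute)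
    qed
    have zsB: "zs \<in> ball y R" using r2 by (simp add: dist_norm norm_minus_commute r_def)
    define P where "P = (norm (zs - y))\<^sup>2"
    define vb where "vb b = exp (- \<alpha> * P) * (4 * \<alpha>\<^sup>2 * (inner (zs - y) b)\<^sup>2 - 2 * \<alpha>)" for b
    have each: "D2 zs b + \<eta> * vb b \<le> 0" if b: "b \<in> Basis" for b
    proof -
      obtain \<delta> g1 where dg: "\<delta> > 0" "\<forall>t. \<bar>t\<bar> < \<delta> \<longrightarrow>
               ((\<lambda>s. u (zs + s *\<^sub>R b)) has_real_derivative g1 t) (at t)"
               "(g1 has_real_derivative D2 zs b) (at 0)"
        using D2 zsB b by blast
      note bd1 = barrier_D2(1)[OF b, where z=zs and y=y and \<alpha>=\<alpha> and C="exp (- \<alpha> * R\<^sup>2)"]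
      note bd2 = barrier_D2(2)[OF b, where z=zs and y=y and \<alpha>=\<alpha>]
      define Q where "Q = inner (zs - y) b"
      define g1v where "g1v t = exp (- \<alpha> * (P + 2 * t * Q + t\<^sup>2)) * (- \<alpha> * (2 * Q + 2 * t))" for t
      have vd: "\<forall>t. ((\<lambda>s. v (zs + s *\<^sub>R b)) has_real_derivative g1v t) (at t)"
        using bd1 unfolding v_def g1v_def P_def Q_def by simp
      have vd2: "(g1v has_real_derivative vb b) (at 0)"
        using bd2 unfolding g1v_def vb_def P_def Q_def by simp
      show ?thesis
      proof (rule second_deriv_max[of "min \<delta> \<rho>" "\<lambda>s. w (zs + s *\<^sub>R b)" "\<lambda>t. g1 t + \<eta> * g1v t"])
        show "0 < min \<delta> \<rho>" using dg rho by simp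
        show "\<forall>t. \<bar>t\<bar> < min \<delta> \<rho> \<longrightarrow> w (zs + t *\<^sub>R b) \<le> w (zs + 0 *\<^sub>R b)"
        proof (intro allI impI)
          fix t assume "\<bar>t\<bar> < min \<delta> \<rho>"
          hence "zs + t *\<^sub>R b \<in> ball zs \<rho>" using b by (simp add: dist_norm)
          thus "w (zs + t *\<^sub>R b) \<le> w (zs + 0 *\<^sub>R b)" using zs(2) ballA by auto
        qed
        show "\<forall>t. \<bar>t\<bar> < min \<delta> \<rho> \<longrightarrow>
          ((\<lambda>s. w (zs + s *\<^sub>R b)) has_real_derivative g1 t + \<eta> * g1v t) (at t)"
          unfolding w_def using dg vd by (auto intro!: derivative_eq_intros)
        show "((\<lambda>t. g1 t + \<eta> * g1v t) has_real_derivative D2 zs b + \<eta> * vb b) (at 0)"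
          using dg(3) vd2 by (auto intro!: derivative_eq_intros)
      qed
    qed
    have sum1: "(\<Sum>b\<in>Basis. D2 zs b) + \<eta> * (\<Sum>b\<in>Basis. vb b) \<le> 0"
    proof -
      have "(\<Sum>b\<in>Basis. D2 zs b + \<eta> * vb b) \<le> 0" using each by (intro sum_nonpos) auto
      thus ?thesis by (simp add: sum.distrib sum_distrib_left)
    qed
    have sumvb: "(\<Sum>b\<in>Basis. vb b) = exp (- \<alpha> * P) * (4 * \<alpha>\<^sup>2 * P - 2 * \<alpha> * n)"
    proof -
      have "(\<Sum>b\<in>Basis. vb b) = exp (- \<alpha> * P) * (4 * \<alpha>\<^sup>2 * (\<Sum>b\<in>Basis. (inner (zs - y) b)\<^sup>2) - 2 * \<alpha> * n)"
        by (simp add: vb_def sum_distrib_left sum_subtractf n_def algebra_simps sum_distrib_right)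
      thus ?thesis by (simp add: sum_inner_sq P_def)
    qed
    have vzs: "v zs \<le> exp (- \<alpha> * P)" by (simp add: v_def P_def)
    have lapzs: "(\<Sum>b\<in>Basis. D2 zs b) \<ge> - c * \<eta> * exp (- \<alpha> * P)"
    proof -
      have "(\<Sum>b\<in>Basis. D2 zs b) \<ge> c * (u zs - M)" using lap zsB by (simp add: M_def)
      moreover have "u zs - M = w zs - M - \<eta> * v zs" by (simp add: w_def)
      moreover have "c * (w zs - M - \<eta> * v zs) \<ge> - c * \<eta> * exp (- \<alpha> * P)"
      proof -
        have "\<eta> * v zs \<le> \<eta> * exp (- \<alpha> * P)" using vzs eta by simp
        hence "w zs - M - \<eta> * v zs \<ge> - \<eta> * exp (- \<alpha> * P)" using big by simp
        thus ?thesis using c mult_left_mono by fastforce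
      qed
      ultimately show ?thesis by simp
    qed
    have Pbig: "P > R\<^sup>2 / 4"
    proof -
      have "(R / 2)\<^sup>2 < r\<^sup>2" using r2 R by (intro power_strict_mono) auto
      thus ?thesis by (simp add: P_def r_def power_divide)
    qed
    have key: "4 * \<alpha>\<^sup>2 * P - 2 * \<alpha> * n - c > 0"
    proof -
      have "\<alpha>\<^sup>2 * R\<^sup>2 \<le> \<alpha>\<^sup>2 * (4 * P)" using Pbig by (intro mult_left_mono) auto
      hence "4 * \<alpha>\<^sup>2 * P \<ge> \<alpha>\<^sup>2 * R\<^sup>2" by (simp add: algebra_simps)
      moreover have "\<alpha>\<^sup>2 * R\<^sup>2 = \<alpha> * (\<alpha> * R\<^sup>2)" by (simp add: power2_eq_square)
      moreover have "\<alpha> * (\<alpha> * R\<^sup>2) \<ge> \<alpha> * (2 * n + c + 1)" using aR a1 by simp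
      moreover have "\<alpha> * (2 * n + c + 1) \<ge> 2 * \<alpha> * n + c + 1"
      proof -
        have "\<alpha> * (c + 1) \<ge> 1 * (c + 1)" using a1 c by (intro mult_right_mono) auto
        thus ?thesis by (simp add: algebra_simps)
      qed
      ultimately show ?thesis by linarith
    qed
    have "(\<Sum>b\<in>Basis. D2 zs b) + \<eta> * (\<Sum>b\<in>Basis. vb b) \<ge>
          \<eta> * exp (- \<alpha> * P) * (4 * \<alpha>\<^sup>2 * P - 2 * \<alpha> * n - c)"
      using lapzs unfolding sumvb by (simp add: algebra_simps)
    moreover have "\<eta> * exp (- \<alpha> * P) * (4 * \<alpha>\<^sup>2 * P - 2 * \<alpha> * n - c) > 0"
      using eta key by simp
    ultimately show False using sum1 by linarith
  qed
  define \<kappa> where "\<kappa> = \<eta> * \<alpha> * R * exp (- \<alpha> * R\<^sup>2)"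
  have kappa: "\<kappa> > 0" using eta a1 R by (simp add: \<kappa>_def)
  have "\<forall>t. 0 < t \<and> t < R / 2 \<longrightarrow> u (x0 + t *\<^sub>R ((1 / R) *\<^sub>R (y - x0))) \<le> u x0 - \<kappa> * t"
  proof (intro allI impI)
    fix t assume t: "0 < t \<and> t < R / 2"
    define pt where "pt = x0 + t *\<^sub>R ((1 / R) *\<^sub>R (y - x0))"
    have "pt - y = (1 - t / R) *\<^sub>R (x0 - y)" by (simp add: pt_def algebra_simps)
    hence "norm (pt - y) = \<bar>1 - t / R\<bar> * norm (x0 - y)" by simp
    moreover have "\<bar>1 - t / R\<bar> = 1 - t / R" using t R by simp
    ultimately have npt: "norm (pt - y) = R - t" using x0 R by (simp add: field_simps)
    have "pt \<in> A" using npt t by (auto simp: A_def dist_norm norm_minus_commute)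
    hence "w pt \<le> M" using zs wmax by force
    hence upt: "u pt \<le> M - \<eta> * v pt" by (simp add: w_def)
    have "v pt \<ge> exp (- \<alpha> * R\<^sup>2) * (- \<alpha> * (R - t)\<^sup>2 - - \<alpha> * R\<^sup>2)"
      unfolding v_def npt by (rule exp_diff_lower)
    moreover have "- \<alpha> * (R - t)\<^sup>2 - - \<alpha> * R\<^sup>2 \<ge> \<alpha> * R * t"
    proof -
      have "- \<alpha> * (R - t)\<^sup>2 - - \<alpha> * R\<^sup>2 = \<alpha> * (2 * R * t - t\<^sup>2)" by (simp add: algebra_simps power2_eq_square)
      moreover have "2 * R * t - t\<^sup>2 \<ge> R * t" using t by (simp add: power2_eq_square algebra_simps mult_right_mono)
      ultimately show ?thesis using a1 by (simp add: mult_left_mono)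
    qed
    ultimately have "v pt \<ge> exp (- \<alpha> * R\<^sup>2) * (\<alpha> * R * t)"
      by (smt (verit) exp_gt_zero mult_left_mono)
    hence "\<eta> * v pt \<ge> \<kappa> * t" using eta by (simp add: \<kappa>_def mult_left_mono algebra_simps)
    thus "u (x0 + t *\<^sub>R ((1 / R) *\<^sub>R (y - x0))) \<le> u x0 - \<kappa> * t"
      using upt by (simp add: pt_def M_def)
  qed
  thus ?thesis using kappa R by (intro exI[of _ \<kappa>] conjI exI[of _ "R / 2"]) auto
qed



lemma deriv_dir_bound:
  fixes u :: "'a::euclidean_space \<Rightarrow> real"
  assumes der: "(u has_derivative D) (at x0 within T)" and tau: "\<tau> > 0"
    and seg: "\<forall>t. 0 < t \<and> t < \<tau> \<longrightarrow> x0 + t *\<^sub>R e \<in> T \<and> u (x0 + t *\<^sub>R e) \<le> u x0 - \<kappa> * t"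
  shows "D e \<le> - \<kappa>"
proof -
  define I where "I = {0<..<\<tau>}"
  define f where "f t = x0 + t *\<^sub>R e" for t :: real
  have fd: "(f has_derivative (\<lambda>t. t *\<^sub>R e)) (at 0 within I)"
    unfolding f_def by (auto intro!: derivative_eq_intros)
  have sub: "f ` I \<subseteq> T" using seg by (auto simp: I_def f_def)
  have "(u has_derivative D) (at (f 0) within (f ` I))"
    using has_derivative_subset[OF der sub] by (simp add: f_def)
  from diff_chain_within[OF fd this]
  have "((u \<circ> f) has_derivative (D \<circ> (\<lambda>t. t *\<^sub>R e))) (at 0 within I)" .
  moreover have "linear D" using der has_derivative_linear by blast
  hence "(D \<circ> (\<lambda>t. t *\<^sub>R e)) = (*) (D e)" by (auto simp: o_def linear_scale mult.commute)
  ultimately have "((u \<circ> f) has_real_derivative D e) (at 0 within I)"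
    by (simp add: has_field_derivative_def)
  hence lim: "((\<lambda>y. ((u \<circ> f) y - (u \<circ> f) 0) / (y - 0)) \<longlongrightarrow> D e) (at 0 within I)"
    using has_field_derivative_iff by blast
  have ev: "eventually (\<lambda>y. - \<kappa> \<ge> ((u \<circ> f) y - (u \<circ> f) 0) / (y - 0)) (at 0 within I)"
  proof -
    have "\<forall>y\<in>I. - \<kappa> \<ge> ((u \<circ> f) y - (u \<circ> f) 0) / (y - 0)"
    proof
      fix y assume "y \<in> I"
      hence y: "0 < y" "y < \<tau>" by (auto simp: I_def)
      hence "u (f y) - u (f 0) \<le> - \<kappa> * y" using seg by (auto simp: f_def)
      thus "- \<kappa> \<ge> ((u \<circ> f) y - (u \<circ> f) 0) / (y - 0)" using y by (simp add: divide_le_eq)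
    qed
    thus ?thesis by (auto simp: eventually_at_filter)
  qed
  have nt: "\<not> trivial_limit (at (0::real) within I)"
    using islimpt_greaterThanLessThan1[OF tau] by (simp add: trivial_limit_within I_def)
  show ?thesis using tendsto_upperbound[OF lim ev nt] .
qed

lemma fmax_attained:
  fixes f :: "'a::euclidean_space \<Rightarrow> real"
  assumes "bounded \<Omega>" "\<Omega> \<noteq> {}" "continuous_on (closure \<Omega>) f"
  shows "\<exists>x0\<in>closure \<Omega>. f x0 = fmax \<Omega> f \<and> (\<forall>x\<in>closure \<Omega>. f x \<le> fmax \<Omega> f)"
proof -
  have c: "compact (closure \<Omega>)" using assms(1) by (simp add: compact_closure)
  have ne: "closure \<Omega> \<noteq> {}" using assms(2) by simp
  obtain x0 where x0: "x0 \<in> closure \<Omega>" "\<forall>y\<in>closure \<Omega>. f y \<le> f x0"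
    using continuous_attains_sup[OF c ne assms(3)] by blast
  have "fmax \<Omega> f = f x0" unfolding fmax_def
    by (rule cSup_eq_maximum) (use x0 in auto)
  thus ?thesis using x0 by auto
qed

lemma holder_cont:
  assumes "holder_continuous_on S f"
  shows "continuous_on S f"
proof -
  obtain \<alpha> C where h: "0 < \<alpha>" "\<alpha> \<le> 1" "\<forall>x\<in>S. \<forall>y\<in>S. \<bar>f x - f y\<bar> \<le> C * dist x y powr \<alpha>"
    using assms unfolding holder_continuous_on_def by blast
  show ?thesis unfolding continuous_on_iff
  proof (intro ballI allI impI)
    fix x e :: real
    fix x' assume x': "x' \<in> S" and e: "(0::real) < e"
    define C' where "C' = max C 1"
    have C': "C' > 0" "C \<le> C'" by (auto simp: C'_def)
    define d where "d = (e / (2 * C')) powr (1 / \<alpha>)"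
    have d: "d > 0" using e C' by (simp add: d_def)
    have "\<forall>y\<in>S. dist y x' < d \<longrightarrow> dist (f y) (f x') < e"
    proof (intro ballI impI)
      fix y assume y: "y \<in> S" "dist y x' < d"
      have "dist y x' powr \<alpha> \<le> d powr \<alpha>" using y h by (intro powr_mono2) auto
      also have "\<dots> = e / (2 * C')" using e C' h by (simp add: d_def powr_powr)
      finally have dp: "dist y x' powr \<alpha> \<le> e / (2 * C')" .
      have "\<bar>f y - f x'\<bar> \<le> C * dist y x' powr \<alpha>" using h y x' by auto
      also have "\<dots> \<le> C' * dist y x' powr \<alpha>" using C' by (intro mult_right_mono) auto
      also have "\<dots> \<le> C' * (e / (2 * C'))" using dp C' by (intro mult_left_mono) auto
      also have "\<dots> < e" using C' e by simp
      finally show "dist (f y) (f x') < e" by (simp add: dist_real_def)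
    qed
    thus "\<exists>d>0. \<forall>y\<in>S. dist y x' < d \<longrightarrow> dist (f y) (f x') < e" using d by blast
  qed
qed

lemma C1_closure_cont:
  assumes "C1_closure \<Omega> f"
  shows "continuous_on (closure \<Omega>) f"
proof -
  have "\<forall>x\<in>closure \<Omega>. f differentiable (at x within closure \<Omega>)" using assms by (simp add: C1_closure_def)
  thus ?thesis using differentiable_imp_continuous_within continuous_on_eq_continuous_within by blast
qed



lemma linear_expand:
  fixes L :: "'a::euclidean_space \<Rightarrow> real"
  assumes "linear L"
  shows "L h = (\<Sum>b\<in>Basis. inner h b * L b)"
proof -
  have "L h = L (\<Sum>b\<in>Basis. inner h b *\<^sub>R b)" by (simp add: euclidean_representation)
  also have "\<dots> = (\<Sum>b\<in>Basis. inner h b * L b)"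
    using assms by (simp add: linear_sum linear_scale)
  finally show ?thesis .
qed

lemma frechet_grad:
  fixes f :: "'a::euclidean_space \<Rightarrow> real"
  assumes "f differentiable (at z)"
  shows "frechet_derivative f (at z) h = inner (grad f z) h"
proof -
  have "linear (frechet_derivative f (at z))"
    using assms frechet_derivative_works has_derivative_linear by blast
  hence "frechet_derivative f (at z) h = (\<Sum>b\<in>Basis. inner h b * partial f b z)"
    unfolding partial_def by (rule linear_expand)
  also have "\<dots> = inner (grad f z) h"
    by (simp add: grad_def inner_sum_right inner_commute mult.commute)
  finally show ?thesis .
qed

lemma pointwise_lip:
  fixes F :: "'a::euclidean_space \<Rightarrow> 'b::real_normed_vector"
  assumes "(F has_derivative F') (at x0)"
  shows "\<exists>L r. r > 0 \<and> L \<ge> 0 \<and> (\<forall>z. norm (z - x0) < r \<longrightarrow> norm (F z - F x0) \<le> L * norm (z - x0))"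
proof -
  have bl: "bounded_linear F'" and e: "\<forall>e>0. \<exists>d>0. \<forall>y. norm (y - x0) < d \<longrightarrow> norm (F y - F x0 - F' (y - x0)) \<le> e * norm (y - x0)"
    using assms has_derivative_at_alt by blast+
  obtain K where K: "\<And>h. norm (F' h) \<le> norm h * K" "K > 0" using bounded_linear.pos_bounded[OF bl] by blast
  obtain d where d: "d > 0" "\<forall>y. norm (y - x0) < d \<longrightarrow> norm (F y - F x0 - F' (y - x0)) \<le> 1 * norm (y - x0)"
    using e by (meson zero_less_one)
  have "\<forall>z. norm (z - x0) < d \<longrightarrow> norm (F z - F x0) \<le> (K + 1) * norm (z - x0)"
  proof (intro allI impI)
    fix z assume z: "norm (z - x0) < d"
    have "norm (F z - F x0) \<le> norm (F z - F x0 - F' (z - x0)) + norm (F' (z - x0))"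
      using norm_triangle_ineq[of "F z - F x0 - F' (z - x0)" "F' (z - x0)"] by simp
    also have "\<dots> \<le> 1 * norm (z - x0) + norm (z - x0) * K" using d z K(1) by (intro add_mono) auto
    finally show "norm (F z - F x0) \<le> (K + 1) * norm (z - x0)" by (simp add: algebra_simps)
  qed
  thus ?thesis using d K by (intro exI[of _ "K + 1"] exI[of _ d]) auto
qed

lemma smooth_C2: "smooth_on S f \<Longrightarrow> Ck_on 2 S f"
  by (simp add: smooth_on_def)

lemma taylor_upper:
  fixes \<phi> :: "'a::euclidean_space \<Rightarrow> real"
  assumes "Ck_on 2 UNIV \<phi>"
  shows "\<exists>K r. r > 0 \<and> K \<ge> 0 \<and> (\<forall>x. norm (x - x0) < r \<longrightarrow>
           \<phi> x \<le> \<phi> x0 + inner (grad \<phi> x0) (x - x0) + K * (norm (x - x0))\<^sup>2)"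
proof -
  have d1: "\<forall>z. \<phi> differentiable (at z)" and d2: "\<forall>b\<in>Basis. \<forall>z. partial \<phi> b differentiable (at z)"
    using assms by (auto simp: Ck_on_2)
  have gd: "grad \<phi> differentiable (at x0)"
    unfolding grad_def[abs_def] using d2
    by (intro differentiable_sum differentiable_scaleR) auto
  obtain L r where Lr: "r > 0" "L \<ge> 0" "\<forall>z. norm (z - x0) < r \<longrightarrow> norm (grad \<phi> z - grad \<phi> x0) \<le> L * norm (z - x0)"
    using pointwise_lip[of "grad \<phi>"] gd unfolding differentiable_def by blast
  define D where "D z = frechet_derivative \<phi> (at z)" for z
  have Dd: "(\<phi> has_derivative D z) (at z)" for z using d1 frechet_derivative_works unfolding D_def by blast
  have Dg: "D z h = inner (grad \<phi> z) h" for z h unfolding D_def by (rule frechet_grad) (use d1 in blast)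
  have "\<forall>x. norm (x - x0) < r \<longrightarrow> \<phi> x \<le> \<phi> x0 + inner (grad \<phi> x0) (x - x0) + L * (norm (x - x0))\<^sup>2"
  proof (intro allI impI)
    fix x assume x: "norm (x - x0) < r"
    define \<rho> where "\<rho> = norm (x - x0)"
    define S where "S = cball x0 \<rho>"
    have "norm (\<phi> x - \<phi> x0 - D x0 (x - x0)) \<le> norm (x - x0) * (L * \<rho>)"
    proof (rule differentiable_bound_linearization[where S=S and f'=D])
      show "x0 + t *\<^sub>R (x - x0) \<in> S" if "t \<in> {0..1}" for t
      proof -
        have t: "0 \<le> t" "t \<le> 1" using that by auto
        have "dist x0 (x0 + t *\<^sub>R (x - x0)) = t * \<rho>" using t by (simp add: dist_norm \<rho>_def)
        moreover have "t * \<rho> \<le> \<rho>" using t by (simp add: \<rho>_def mult_left_le_one_le)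
        ultimately show ?thesis by (simp add: S_def)
      qed
      show "(\<phi> has_derivative D z) (at z within S)" if "z \<in> S" for z
        using Dd has_derivative_at_withinI by blast
      show "x0 \<in> S" by (simp add: S_def \<rho>_def)
      show "onorm (D z - D x0) \<le> L * \<rho>" if z: "z \<in> S" for z
      proof (rule onorm_le)
        fix h
        have "norm ((D z - D x0) h) = \<bar>inner (grad \<phi> z - grad \<phi> x0) h\<bar>"
          by (simp add: Dg inner_diff_left)
        also have "\<dots> \<le> norm (grad \<phi> z - grad \<phi> x0) * norm h" by (rule Cauchy_Schwarz_ineq2)
        also have "\<dots> \<le> (L * \<rho>) * norm h"
        proof (rule mult_right_mono)
          have nz: "norm (z - x0) \<le> \<rho>" using z by (simp add: S_def dist_norm norm_minus_commute)
          hence "norm (z - x0) < r" using x by (simp add: \<rho>_def)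
          hence "norm (grad \<phi> z - grad \<phi> x0) \<le> L * norm (z - x0)" using Lr by blast
          also have "\<dots> \<le> L * \<rho>" using nz Lr(2) by (intro mult_left_mono) auto
          finally show "norm (grad \<phi> z - grad \<phi> x0) \<le> L * \<rho>" .
        qed simp
        finally show "norm ((D z - D x0) h) \<le> L * \<rho> * norm h" .
      qed
    qed
    hence "\<bar>\<phi> x - \<phi> x0 - inner (grad \<phi> x0) (x - x0)\<bar> \<le> norm (x - x0) * (L * norm (x - x0))"
      by (simp add: Dg \<rho>_def)
    hence "\<phi> x - \<phi> x0 - inner (grad \<phi> x0) (x - x0) \<le> L * (norm (x - x0))\<^sup>2"
      by (simp add: power2_eq_square mult.commute mult.left_commute)
    thus "\<phi> x \<le> \<phi> x0 + inner (grad \<phi> x0) (x - x0) + L * (norm (x - x0))\<^sup>2" by simp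
  qed
  thus ?thesis using Lr by blast
qed



lemma interior_ball:
  fixes \<Omega> :: "'a::euclidean_space set"
  assumes dom: "smooth_bounded_domain \<Omega> \<phi>" and x0: "x0 \<in> frontier \<Omega>"
  shows "\<exists>R0>0. \<forall>R. 0 < R \<and> R \<le> R0 \<longrightarrow> ball (x0 - R *\<^sub>R outward_normal \<phi> x0) R \<subseteq> \<Omega>"
proof -
  have sm: "smooth_on UNIV \<phi>" and Om: "\<Omega> = {x. \<phi> x < 0}" and fr: "frontier \<Omega> = {x. \<phi> x = 0}"
    and gn: "\<forall>x. \<phi> x = 0 \<longrightarrow> grad \<phi> x \<noteq> 0"
    using dom by (auto simp: smooth_bounded_domain_def)
  have p0: "\<phi> x0 = 0" using x0 fr by auto
  define g where "g = grad \<phi> x0"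
  have g0: "g \<noteq> 0" using gn p0 by (simp add: g_def)
  define ng where "ng = norm g"
  have ng: "ng > 0" using g0 by (simp add: ng_def)
  define \<nu> where "\<nu> = outward_normal \<phi> x0"
  have \<nu>: "\<nu> = (1 / ng) *\<^sub>R g" by (simp add: \<nu>_def outward_normal_def g_def ng_def)
  have n\<nu>: "norm \<nu> = 1" using ng by (simp add: \<nu> ng_def)
  obtain K r where Kr: "r > 0" "K \<ge> 0" "\<forall>x. norm (x - x0) < r \<longrightarrow>
           \<phi> x \<le> \<phi> x0 + inner (grad \<phi> x0) (x - x0) + K * (norm (x - x0))\<^sup>2"
    using taylor_upper[OF smooth_C2[OF sm], of x0] by blast
  define K' where "K' = K + 1"
  have K': "K' > 0" "K \<le> K'" using Kr by (auto simp: K'_def)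
  define R0 where "R0 = min (r / 2) (ng / (2 * K'))"
  have R0: "R0 > 0" using Kr ng K' by (simp add: R0_def)
  have "\<forall>R. 0 < R \<and> R \<le> R0 \<longrightarrow> ball (x0 - R *\<^sub>R \<nu>) R \<subseteq> \<Omega>"
  proof (intro allI impI subsetI)
    fix R x assume R: "0 < R \<and> R \<le> R0" and x: "x \<in> ball (x0 - R *\<^sub>R \<nu>) R"
    define h where "h = x - x0"
    have xy: "norm (h + R *\<^sub>R \<nu>) < R" using x by (simp add: h_def dist_norm norm_minus_commute algebra_simps)
    have "(norm (h + R *\<^sub>R \<nu>))\<^sup>2 = (norm h)\<^sup>2 + 2 * R * inner h \<nu> + R\<^sup>2"
    proof -
      have "(norm (h + R *\<^sub>R \<nu>))\<^sup>2 = inner (h + R *\<^sub>R \<nu>) (h + R *\<^sub>R \<nu>)" by (rule power2_norm_eq_inner)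
      also have "\<dots> = inner h h + 2 * R * inner h \<nu> + R\<^sup>2 * inner \<nu> \<nu>"
        by (simp add: inner_add_left inner_add_right inner_commute algebra_simps power2_eq_square)
      also have "inner \<nu> \<nu> = 1" using n\<nu> by (simp add: power2_norm_eq_inner[symmetric])
      finally show ?thesis by (simp add: power2_norm_eq_inner)
    qed
    moreover have "(norm (h + R *\<^sub>R \<nu>))\<^sup>2 < R\<^sup>2" using xy by (intro power_strict_mono) auto
    ultimately have key: "(norm h)\<^sup>2 + 2 * R * inner h \<nu> < 0" by simp
    have nh: "norm h < 2 * R"
    proof -
      have "norm h \<le> norm (h + R *\<^sub>R \<nu>) + norm (R *\<^sub>R \<nu>)"
        using norm_triangle_ineq4[of "h + R *\<^sub>R \<nu>" "R *\<^sub>R \<nu>"] by simp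
      thus ?thesis using xy n\<nu> R by simp
    qed
    have "norm h < r" using nh R by (simp add: R0_def)
    hence tay: "\<phi> x \<le> inner g h + K * (norm h)\<^sup>2" using Kr p0 by (simp add: h_def g_def)
    have gh: "inner g h = ng * inner h \<nu>" using ng by (simp add: \<nu> inner_commute)
    have hnu: "inner h \<nu> < - (norm h)\<^sup>2 / (2 * R)" using key R by (simp add: field_simps)
    have "ng * inner h \<nu> < ng * (- (norm h)\<^sup>2 / (2 * R))" using hnu ng by (intro mult_strict_left_mono) auto
    hence "\<phi> x < (norm h)\<^sup>2 * (K - ng / (2 * R))" using tay gh by (simp add: algebra_simps)
    moreover have "K - ng / (2 * R) \<le> 0"
    proof -
      have "R \<le> ng / (2 * K')" using R by (simp add: R0_def)
      hence "R * (2 * K') \<le> ng" using K' by (simp add: field_simps)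
      hence "K' \<le> ng / (2 * R)" using R by (simp add: field_simps)
      thus ?thesis using K' by simp
    qed
    ultimately have "\<phi> x < 0" by (smt (verit) mult_nonpos_nonneg zero_le_power2 mult.commute)
    thus "x \<in> \<Omega>" using Om by simp
  qed
  thus ?thesis using R0 by (auto simp: \<nu>_def)
qed



lemma lap_local_max:
  fixes u :: "'a::euclidean_space \<Rightarrow> real"
  assumes U: "open U" and C2: "Ck_on 2 U u" and z: "z \<in> U"
    and d: "\<delta> > 0" and mx: "\<forall>x\<in>ball z \<delta>. u x \<le> u z"
  shows "laplacian u z \<le> 0"
proof -
  have "partial (partial u b) b z \<le> 0" if b: "b \<in> Basis" for b
  proof -
    obtain \<delta>b where db: "\<delta>b > 0" "\<forall>t. \<bar>t\<bar> < \<delta>b \<longrightarrow>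
      ((\<lambda>s. u (z + s *\<^sub>R b)) has_real_derivative partial u b (z + t *\<^sub>R b)) (at t)"
      "((\<lambda>t. partial u b (z + t *\<^sub>R b)) has_real_derivative partial (partial u b) b z) (at 0)"
      using ck2_D2[OF U C2 z b] by blast
    show ?thesis
    proof (rule second_deriv_max[of "min \<delta> \<delta>b" "\<lambda>s. u (z + s *\<^sub>R b)" "\<lambda>t. partial u b (z + t *\<^sub>R b)"])
      show "0 < min \<delta> \<delta>b" using d db by simp
      show "\<forall>t. \<bar>t\<bar> < min \<delta> \<delta>b \<longrightarrow> u (z + t *\<^sub>R b) \<le> u (z + 0 *\<^sub>R b)"
        using mx b by (auto simp: dist_norm)
      show "\<forall>t. \<bar>t\<bar> < min \<delta> \<delta>b \<longrightarrow>
         ((\<lambda>s. u (z + s *\<^sub>R b)) has_real_derivative partial u b (z + t *\<^sub>R b)) (at t)"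
        using db by auto
      show "((\<lambda>t. partial u b (z + t *\<^sub>R b)) has_real_derivative partial (partial u b) b z) (at 0)"
        using db by auto
    qed
  qed
  thus ?thesis unfolding laplacian_def by (intro sum_nonpos) auto
qed

lemma max_principle_point:
  fixes \<Omega> :: "'a::euclidean_space set" and u G :: "'a \<Rightarrow> real"
  assumes dom: "smooth_bounded_domain \<Omega> \<phi>"
    and C2: "Ck_on 2 \<Omega> u" and C1: "C1_closure \<Omega> u"
    and bc: "\<forall>x\<in>frontier \<Omega>. normal_deriv \<Omega> \<phi> u x = 0"
    and G: "continuous_on (closure \<Omega>) G"
    and eq: "\<forall>x\<in>\<Omega>. laplacian u x = G x"
    and x0: "x0 \<in> closure \<Omega>" "\<forall>x\<in>closure \<Omega>. u x \<le> u x0"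
  shows "G x0 \<le> 0"
proof (rule ccontr)
  assume "\<not> G x0 \<le> 0"
  hence Gp: "G x0 > 0" by simp
  have op: "open \<Omega>" using dom unfolding smooth_bounded_domain_def by blast
  have noint: False if z: "z \<in> \<Omega>" "G z > 0" "\<forall>x\<in>closure \<Omega>. u x \<le> u z" for z
  proof -
    obtain d where d: "d > 0" "ball z d \<subseteq> \<Omega>" using op z(1) open_contains_ball by blast
    have "\<forall>x\<in>ball z d. u x \<le> u z" using d z(3) closure_subset by blast
    hence "laplacian u z \<le> 0" using lap_local_max[OF op C2 z(1) d(1)] by blast
    thus False using eq z by auto
  qed
  show False
  proof (cases "x0 \<in> \<Omega>")
    case True thus False using noint[of x0] Gp x0 by blast
  next
    case False
    hence fx0: "x0 \<in> frontier \<Omega>" using x0(1) op by (simp add: frontier_def interior_open)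
    obtain \<delta> where \<delta>: "\<delta> > 0" "\<forall>x\<in>closure \<Omega>. dist x x0 < \<delta> \<longrightarrow> dist (G x) (G x0) < G x0"
      using G x0(1) Gp unfolding continuous_on_iff by blast
    have Gpos: "G x > 0" if "x \<in> closure \<Omega>" "dist x x0 < \<delta>" for x
      using \<delta>(2) that by (force simp: dist_real_def)
    obtain R0 where R0: "R0 > 0" "\<forall>R. 0 < R \<and> R \<le> R0 \<longrightarrow> ball (x0 - R *\<^sub>R outward_normal \<phi> x0) R \<subseteq> \<Omega>"
      using interior_ball[OF dom fx0] by blast
    define R where "R = min R0 (\<delta> / 2)"
    have R: "R > 0" "R \<le> R0" using R0 \<delta> by (auto simp: R_def)
    define \<nu> where "\<nu> = outward_normal \<phi> x0"
    have gn: "grad \<phi> x0 \<noteq> 0" using dom fx0 by (auto simp: smooth_bounded_domain_def)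
    have n\<nu>: "norm \<nu> = 1" using gn by (simp add: \<nu>_def outward_normal_def)
    define y where "y = x0 - R *\<^sub>R \<nu>"
    have By: "ball y R \<subseteq> \<Omega>" using R0(2) R by (simp add: y_def \<nu>_def)
    have x0y: "norm (x0 - y) = R" using n\<nu> R by (simp add: y_def)
    have near: "dist x x0 < \<delta>" if "x \<in> ball y R" for x
    proof -
      have "dist x x0 \<le> dist x y + dist y x0" by (rule dist_triangle)
      also have "\<dots> < R + R" using that x0y by (simp add: dist_commute dist_norm norm_minus_commute)
      finally show ?thesis by (simp add: R_def)
    qed
    have cb: "cball y R \<subseteq> closure \<Omega>"
    proof -
      have "closure (ball y R) \<subseteq> closure \<Omega>" using By closure_mono by blast
      thus ?thesis using R by simp
    qed
    have ucont: "continuous_on (cball y R) u"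
      using continuous_on_subset[OF C1_closure_cont[OF C1] cb] .
    have less: "\<forall>z\<in>ball y R. u z < u x0"
    proof
      fix z assume z: "z \<in> ball y R"
      have "z \<in> closure \<Omega>" using z By closure_subset by blast
      hence le: "u z \<le> u x0" using x0 by blast
      show "u z < u x0"
      proof (rule ccontr)
        assume "\<not> u z < u x0"
        hence "u z = u x0" using le by simp
        hence "\<forall>x\<in>closure \<Omega>. u x \<le> u z" using x0 by simp
        moreover have "G z > 0" using Gpos near z \<open>z \<in> closure \<Omega>\<close> by blast
        ultimately show False using noint z By by blast
      qed
    qed
    have D2: "\<forall>z\<in>ball y R. \<forall>b\<in>Basis. \<exists>\<delta>>0. \<exists>g1. (\<forall>t. \<bar>t\<bar> < \<delta> \<longrightarrow>
               ((\<lambda>s. u (z + s *\<^sub>R b)) has_real_derivative g1 t) (at t)) \<and>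
               (g1 has_real_derivative (\<lambda>z b. partial (partial u b) b z) z b) (at 0)"
    proof (intro ballI)
      fix z and b :: 'a assume zb: "z \<in> ball y R" "b \<in> Basis"
      have zO: "z \<in> \<Omega>" using zb(1) By by blast
      obtain \<delta>' where W: "\<delta>' > 0" "\<forall>t. \<bar>t\<bar> < \<delta>' \<longrightarrow>
      ((\<lambda>s. u (z + s *\<^sub>R b)) has_real_derivative partial u b (z + t *\<^sub>R b)) (at t)"
      "((\<lambda>t. partial u b (z + t *\<^sub>R b)) has_real_derivative partial (partial u b) b z) (at 0)"
        using ck2_D2[OF op C2 zO zb(2)] by blast
      show "\<exists>\<delta>>0. \<exists>g1. (\<forall>t. \<bar>t\<bar> < \<delta> \<longrightarrow>
               ((\<lambda>s. u (z + s *\<^sub>R b)) has_real_derivative g1 t) (at t)) \<and>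
               (g1 has_real_derivative (\<lambda>z b. partial (partial u b) b z) z b) (at 0)"
        apply (rule exI[of _ \<delta>'])
        apply (intro conjI exI[of _ "\<lambda>t. partial u b (z + t *\<^sub>R b)"])
        using W by auto
    qed
    have lap: "\<forall>z\<in>ball y R. (\<Sum>b\<in>Basis. (\<lambda>z b. partial (partial u b) b z) z b) \<ge> 0 * (u z - u x0)"
    proof
      fix z assume z: "z \<in> ball y R"
      hence "z \<in> \<Omega>" "z \<in> closure \<Omega>" using By closure_subset by blast+
      hence "laplacian u z > 0" using eq Gpos near z by auto
      thus "(\<Sum>b\<in>Basis. (\<lambda>z b. partial (partial u b) b z) z b) \<ge> 0 * (u z - u x0)"
        by (simp add: laplacian_def)
    qed
    obtain \<kappa> \<tau> where kt: "\<kappa> > 0" "\<tau> > 0" "\<forall>t. 0 < t \<and> t < \<tau> \<longrightarrow>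
           u (x0 + t *\<^sub>R ((1 / R) *\<^sub>R (y - x0))) \<le> u x0 - \<kappa> * t"
      using hopf[OF R(1) x0y ucont less order_refl D2 lap] by blast
    have e: "(1 / R) *\<^sub>R (y - x0) = - \<nu>" using R by (simp add: y_def)
    define D where "D = frechet_derivative u (at x0 within closure \<Omega>)"
    have Dd: "(u has_derivative D) (at x0 within closure \<Omega>)"
      using C1 x0(1) frechet_derivative_works unfolding C1_closure_def D_def by blast
    have seg: "\<forall>t. 0 < t \<and> t < min \<tau> R \<longrightarrow> x0 + t *\<^sub>R (- \<nu>) \<in> closure \<Omega> \<and> u (x0 + t *\<^sub>R (- \<nu>)) \<le> u x0 - \<kappa> * t"
    proof (intro allI impI conjI)
      fix t assume t: "0 < t \<and> t < min \<tau> R"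
      have "x0 + t *\<^sub>R (- \<nu>) - y = (R - t) *\<^sub>R \<nu>" by (simp add: y_def algebra_simps)
      hence "norm (x0 + t *\<^sub>R (- \<nu>) - y) = \<bar>R - t\<bar>" using n\<nu> by simp
      hence "dist y (x0 + t *\<^sub>R (- \<nu>)) = R - t" using t by (simp add: dist_norm norm_minus_commute)
      hence "x0 + t *\<^sub>R (- \<nu>) \<in> ball y R" using t by simp
      thus "x0 + t *\<^sub>R (- \<nu>) \<in> closure \<Omega>" using By closure_subset by blast
      show "u (x0 + t *\<^sub>R (- \<nu>)) \<le> u x0 - \<kappa> * t" using kt(3) t e by auto
    qed
    have "D (- \<nu>) \<le> - \<kappa>" using deriv_dir_bound[OF Dd _ seg] kt R by simp
    moreover have "linear D" using Dd has_derivative_linear by blast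
    hence "D (- \<nu>) = - D \<nu>" by (simp add: linear_neg)
    moreover have "D \<nu> = 0" using bc fx0 by (simp add: D_def \<nu>_def normal_deriv_def)
    ultimately show False using kt by simp
  qed
qed



lemma hopf_zero:
  fixes I :: "'a::euclidean_space \<Rightarrow> real"
  assumes U: "open U" and C2: "Ck_on 2 U I" and BU: "ball y R \<subseteq> U" and R: "R > 0"
    and x0: "norm (x0 - y) = R" and cont: "continuous_on (cball y R) I"
    and pos: "\<forall>z\<in>ball y R. I z > 0" and z0: "I x0 = 0" and c: "c \<ge> 0"
    and lapI: "\<forall>z\<in>ball y R. laplacian I z \<le> c * I z"
  shows "\<exists>\<kappa>>0. \<exists>\<tau>>0. \<forall>t. 0 < t \<and> t < \<tau> \<longrightarrow> I (x0 + t *\<^sub>R ((1 / R) *\<^sub>R (y - x0))) \<ge> \<kappa> * t"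
proof -
  have D2: "\<forall>z\<in>ball y R. \<forall>b\<in>Basis. \<exists>\<delta>>0. \<exists>g1. (\<forall>t. \<bar>t\<bar> < \<delta> \<longrightarrow>
               ((\<lambda>s. (\<lambda>x. - I x) (z + s *\<^sub>R b)) has_real_derivative g1 t) (at t)) \<and>
               (g1 has_real_derivative (\<lambda>z b. - partial (partial I b) b z) z b) (at 0)"
  proof (intro ballI)
    fix z and b :: 'a assume zb: "z \<in> ball y R" "b \<in> Basis"
    have zO: "z \<in> U" using zb(1) BU by blast
    obtain \<delta>' where W: "\<delta>' > 0" "\<forall>t. \<bar>t\<bar> < \<delta>' \<longrightarrow>
      ((\<lambda>s. I (z + s *\<^sub>R b)) has_real_derivative partial I b (z + t *\<^sub>R b)) (at t)"
      "((\<lambda>t. partial I b (z + t *\<^sub>R b)) has_real_derivative partial (partial I b) b z) (at 0)"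
      using ck2_D2[OF U C2 zO zb(2)] by blast
    show "\<exists>\<delta>>0. \<exists>g1. (\<forall>t. \<bar>t\<bar> < \<delta> \<longrightarrow>
               ((\<lambda>s. (\<lambda>x. - I x) (z + s *\<^sub>R b)) has_real_derivative g1 t) (at t)) \<and>
               (g1 has_real_derivative (\<lambda>z b. - partial (partial I b) b z) z b) (at 0)"
      apply (rule exI[of _ \<delta>'])
      apply (intro conjI exI[of _ "\<lambda>t. - partial I b (z + t *\<^sub>R b)"])
      using W by (auto intro!: derivative_eq_intros)
  qed
  have lap: "\<forall>z\<in>ball y R. (\<Sum>b\<in>Basis. (\<lambda>z b. - partial (partial I b) b z) z b) \<ge> c * ((\<lambda>x. - I x) z - (\<lambda>x. - I x) x0)"
  proof
    fix z assume z: "z \<in> ball y R"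
    have "(\<Sum>b\<in>Basis. (\<lambda>z b. - partial (partial I b) b z) z b) = - laplacian I z"
      by (simp add: laplacian_def sum_negf)
    thus "(\<Sum>b\<in>Basis. (\<lambda>z b. - partial (partial I b) b z) z b) \<ge> c * ((\<lambda>x. - I x) z - (\<lambda>x. - I x) x0)"
      using lapI z z0 by simp
  qed
  have less: "\<forall>z\<in>ball y R. (\<lambda>x. - I x) z < (\<lambda>x. - I x) x0" using pos z0 by simp
  have cont': "continuous_on (cball y R) (\<lambda>x. - I x)" using cont by (intro continuous_intros)
  obtain \<kappa> \<tau> where kt: "\<kappa> > 0" "\<tau> > 0" "\<forall>t. 0 < t \<and> t < \<tau> \<longrightarrow>
       (\<lambda>x. - I x) (x0 + t *\<^sub>R ((1 / R) *\<^sub>R (y - x0))) \<le> (\<lambda>x. - I x) x0 - \<kappa> * t"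
    using hopf[OF R x0 cont' less c D2 lap] by blast
  show ?thesis using kt z0 by (intro exI[of _ \<kappa>] conjI exI[of _ \<tau>]) auto
qed



lemma I_pos_interior:
  fixes \<Omega> :: "'a::euclidean_space set" and I :: "'a \<Rightarrow> real"
  assumes dom: "smooth_bounded_domain \<Omega> \<phi>"
    and C2: "Ck_on 2 \<Omega> I" and C1: "C1_closure \<Omega> I"
    and nn: "\<forall>x\<in>closure \<Omega>. I x \<ge> 0" and nz: "\<exists>x\<in>closure \<Omega>. I x \<noteq> 0"
    and c: "c \<ge> 0" and lapI: "\<forall>x\<in>\<Omega>. laplacian I x \<le> c * I x"
  shows "\<forall>x\<in>\<Omega>. I x > 0"
proof -
  have op: "open \<Omega>" and conn: "connected \<Omega>" using dom unfolding smooth_bounded_domain_def by blast+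
  have Icont: "continuous_on (closure \<Omega>) I" by (rule C1_closure_cont[OF C1])
  have IcontO: "continuous_on \<Omega> I" using continuous_on_subset[OF Icont closure_subset] .
  define Z where "Z = {x \<in> \<Omega>. I x = 0}"
  have Zopen: "open Z"
  proof (unfold open_contains_ball, intro ballI)
    fix z assume zZ: "z \<in> Z"
    obtain \<rho>2 where r2: "\<rho>2 > 0" "ball z \<rho>2 \<subseteq> \<Omega>" using op zZ open_contains_ball Z_def by blast
    define \<rho> where "\<rho> = \<rho>2 / 2"
    have rho: "\<rho> > 0" "cball z \<rho> \<subseteq> \<Omega>" using r2 by (auto simp: \<rho>_def)
    have "\<forall>x\<in>ball z (\<rho> / 2). I x = 0"
    proof (rule ccontr)
      assume "\<not> (\<forall>x\<in>ball z (\<rho> / 2). I x = 0)"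
      then obtain x where x: "x \<in> ball z (\<rho> / 2)" "I x \<noteq> 0" by blast
      have xO: "x \<in> \<Omega>" using x rho by auto
      have Ix: "I x > 0" using x(2) nn xO closure_subset by force
      define Zc where "Zc = {w \<in> cball z \<rho>. I w = 0}"
      have Zcc: "closed Zc" unfolding Zc_def
        by (rule continuous_closed_preimage_constant) (use continuous_on_subset[OF IcontO rho(2)] in auto)
      have zZc: "z \<in> Zc" using zZ rho by (auto simp: Zc_def Z_def)
      obtain x1 where x1: "x1 \<in> Zc" "\<And>w. w \<in> Zc \<Longrightarrow> dist x x1 \<le> dist x w"
        using distance_attains_inf[OF Zcc, of x] zZc by blast
      define r where "r = dist x x1"
      have rz: "r < \<rho> / 2" using x1(2)[OF zZc] x by (simp add: r_def dist_commute)
      have "x \<noteq> x1" using x1(1) Ix by (auto simp: Zc_def)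
      hence rpos: "r > 0" by (simp add: r_def)
      have bsub: "cball x r \<subseteq> cball z \<rho>"
      proof
        fix w assume "w \<in> cball x r"
        hence "dist z w \<le> dist z x + dist x w" "dist x w \<le> r" by (auto intro: dist_triangle)
        moreover have "dist z x < \<rho> / 2" using x by simp
        ultimately show "w \<in> cball z \<rho>" using rz by simp
      qed
      have posb: "\<forall>w\<in>ball x r. I w > 0"
      proof
        fix w assume w: "w \<in> ball x r"
        hence wc: "w \<in> cball z \<rho>" using bsub ball_subset_cball by blast
        have "w \<notin> Zc" using x1(2) w by (force simp: r_def)
        hence "I w \<noteq> 0" using wc by (simp add: Zc_def)
        moreover have "I w \<ge> 0" using nn wc rho closure_subset by blast
        ultimately show "I w > 0" by simp
      qed
      have x1O: "x1 \<in> \<Omega>" using x1(1) rho by (auto simp: Zc_def)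
      have Ix1: "I x1 = 0" using x1(1) by (simp add: Zc_def)
      have nx1: "norm (x1 - x) = r" by (simp add: r_def dist_norm norm_minus_commute)
      have BU: "ball x r \<subseteq> \<Omega>" using bsub rho ball_subset_cball by blast
      have cont: "continuous_on (cball x r) I" using continuous_on_subset[OF IcontO] bsub rho by blast
      have lapb: "\<forall>w\<in>ball x r. laplacian I w \<le> c * I w" using lapI BU by blast
      obtain \<kappa> \<tau> where kt: "\<kappa> > 0" "\<tau> > 0" "\<forall>t. 0 < t \<and> t < \<tau> \<longrightarrow> I (x1 + t *\<^sub>R ((1 / r) *\<^sub>R (x - x1))) \<ge> \<kappa> * t"
        using hopf_zero[OF op C2 BU rpos nx1 cont posb Ix1 c lapb] by blast
      define e where "e = (1 / r) *\<^sub>R (x - x1)"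
      have ne: "norm e = 1" using rpos by (simp add: e_def nx1[unfolded norm_minus_commute[of x1]] )
      obtain \<delta>1 where d1: "\<delta>1 > 0" "ball x1 \<delta>1 \<subseteq> \<Omega>" using op x1O open_contains_ball by blast
      have dI: "I differentiable (at x1)" using C2 x1O by (auto simp: Ck_on_2)
      define D where "D = frechet_derivative I (at x1)"
      have Dd: "(I has_derivative D) (at x1)" using dI frechet_derivative_works unfolding D_def by blast
      have Dm: "((\<lambda>x. - I x) has_derivative (\<lambda>h. - D h)) (at x1 within UNIV)"
        using Dd by (auto intro!: derivative_eq_intros)
      have A: "- D e \<le> - \<kappa>"
      proof (rule deriv_dir_bound[OF Dm kt(2)])
        show "\<forall>t. 0 < t \<and> t < \<tau> \<longrightarrow> x1 + t *\<^sub>R e \<in> UNIV \<and> - I (x1 + t *\<^sub>R e) \<le> - I x1 - \<kappa> * t"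
          using kt(3) Ix1 by (auto simp: e_def)
      qed
      have B: "- D (- e) \<le> - 0"
      proof (rule deriv_dir_bound[OF Dm d1(1)])
        show "\<forall>t. 0 < t \<and> t < \<delta>1 \<longrightarrow> x1 + t *\<^sub>R (- e) \<in> UNIV \<and> - I (x1 + t *\<^sub>R (- e)) \<le> - I x1 - 0 * t"
        proof (intro allI impI conjI)
          fix t assume t: "0 < t \<and> t < \<delta>1"
          have "dist x1 (x1 + t *\<^sub>R (- e)) = t" using ne t by (simp add: dist_norm)
          hence "x1 + t *\<^sub>R (- e) \<in> \<Omega>" using d1 t by auto
          hence "I (x1 + t *\<^sub>R (- e)) \<ge> 0" using nn closure_subset by blast
          thus "- I (x1 + t *\<^sub>R (- e)) \<le> - I x1 - 0 * t" using Ix1 by simp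
        qed simp
      qed
      have "linear D" using Dd has_derivative_linear by blast
      hence "D (- e) = - D e" by (simp add: linear_neg)
      thus False using A B kt(1) by simp
    qed
    moreover have "ball z (\<rho> / 2) \<subseteq> \<Omega>" using rho by auto
    ultimately have "ball z (\<rho> / 2) \<subseteq> Z" by (auto simp: Z_def)
    thus "\<exists>e>0. ball z e \<subseteq> Z" using rho by (intro exI[of _ "\<rho> / 2"]) auto
  qed
  have "openin (top_of_set \<Omega>) Z" using Zopen by (auto simp: Z_def openin_open intro!: exI[of _ Z])
  moreover have "closedin (top_of_set \<Omega>) Z" unfolding Z_def
    by (rule continuous_closedin_preimage_constant[OF IcontO])
  ultimately have "Z = {} \<or> Z = \<Omega>" using conn connected_clopen by blast
  moreover have "Z \<noteq> \<Omega>"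
  proof
    assume "Z = \<Omega>"
    hence z0: "\<And>x. x \<in> \<Omega> \<Longrightarrow> I x = 0" by (auto simp: Z_def)
    have "I x = 0" if "x \<in> closure \<Omega>" for x
      using continuous_le_on_closure[OF Icont that, of 0] continuous_ge_on_closure[OF Icont that, of 0] z0 by force
    thus False using nz by blast
  qed
  ultimately have "Z = {}" by blast
  thus ?thesis using nn closure_subset by (force simp: Z_def)
qed



lemma I_pos_closure:
  fixes \<Omega> :: "'a::euclidean_space set" and I :: "'a \<Rightarrow> real"
  assumes dom: "smooth_bounded_domain \<Omega> \<phi>"
    and C2: "Ck_on 2 \<Omega> I" and C1: "C1_closure \<Omega> I"
    and nn: "\<forall>x\<in>closure \<Omega>. I x \<ge> 0" and nz: "\<exists>x\<in>closure \<Omega>. I x \<noteq> 0"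
    and c: "c \<ge> 0" and lapI: "\<forall>x\<in>\<Omega>. laplacian I x \<le> c * I x"
    and bc: "\<forall>x\<in>frontier \<Omega>. normal_deriv \<Omega> \<phi> I x = 0"
  shows "\<forall>x\<in>closure \<Omega>. I x > 0"
proof
  fix x0 assume x0: "x0 \<in> closure \<Omega>"
  have posO: "\<forall>x\<in>\<Omega>. I x > 0" by (rule I_pos_interior[OF dom C2 C1 nn nz c lapI])
  have op: "open \<Omega>" using dom unfolding smooth_bounded_domain_def by blast
  show "I x0 > 0"
  proof (cases "x0 \<in> \<Omega>")
    case True thus ?thesis using posO by blast
  next
    case False
    hence fx0: "x0 \<in> frontier \<Omega>" using x0 op by (simp add: frontier_def interior_open)
    show ?thesis
    proof (rule ccontr)
      assume "\<not> I x0 > 0"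
      hence Ix0: "I x0 = 0" using nn x0 by force
      obtain R where R0: "R > 0" "\<forall>R'. 0 < R' \<and> R' \<le> R \<longrightarrow> ball (x0 - R' *\<^sub>R outward_normal \<phi> x0) R' \<subseteq> \<Omega>"
        using interior_ball[OF dom fx0] by blast
      define \<nu> where "\<nu> = outward_normal \<phi> x0"
      have gn: "grad \<phi> x0 \<noteq> 0" using dom fx0 by (auto simp: smooth_bounded_domain_def)
      have n\<nu>: "norm \<nu> = 1" using gn by (simp add: \<nu>_def outward_normal_def)
      define y where "y = x0 - R *\<^sub>R \<nu>"
      have By: "ball y R \<subseteq> \<Omega>" using R0 by (simp add: y_def \<nu>_def)
      have x0y: "norm (x0 - y) = R" using n\<nu> R0 by (simp add: y_def)
      have cb: "cball y R \<subseteq> closure \<Omega>"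
      proof -
        have "closure (ball y R) \<subseteq> closure \<Omega>" using By closure_mono by blast
        thus ?thesis using R0 by simp
      qed
      have cont: "continuous_on (cball y R) I"
        using continuous_on_subset[OF C1_closure_cont[OF C1] cb] .
      have posb: "\<forall>z\<in>ball y R. I z > 0" using posO By by blast
      have lapb: "\<forall>z\<in>ball y R. laplacian I z \<le> c * I z" using lapI By by blast
      obtain \<kappa> \<tau> where kt: "\<kappa> > 0" "\<tau> > 0" "\<forall>t. 0 < t \<and> t < \<tau> \<longrightarrow> I (x0 + t *\<^sub>R ((1 / R) *\<^sub>R (y - x0))) \<ge> \<kappa> * t"
        using hopf_zero[OF op C2 By R0(1) x0y cont posb Ix0 c lapb] by blast
      have e: "(1 / R) *\<^sub>R (y - x0) = - \<nu>" using R0 by (simp add: y_def)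
      define D where "D = frechet_derivative I (at x0 within closure \<Omega>)"
      have Dd: "(I has_derivative D) (at x0 within closure \<Omega>)"
        using C1 x0 frechet_derivative_works unfolding C1_closure_def D_def by blast
      have Dm: "((\<lambda>x. - I x) has_derivative (\<lambda>h. - D h)) (at x0 within closure \<Omega>)"
        using Dd by (auto intro!: derivative_eq_intros)
      have seg: "\<forall>t. 0 < t \<and> t < min \<tau> R \<longrightarrow> x0 + t *\<^sub>R (- \<nu>) \<in> closure \<Omega> \<and> - I (x0 + t *\<^sub>R (- \<nu>)) \<le> - I x0 - \<kappa> * t"
      proof (intro allI impI conjI)
        fix t assume t: "0 < t \<and> t < min \<tau> R"
        have "x0 + t *\<^sub>R (- \<nu>) - y = (R - t) *\<^sub>R \<nu>" by (simp add: y_def algebra_simps)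
        hence "norm (x0 + t *\<^sub>R (- \<nu>) - y) = \<bar>R - t\<bar>" using n\<nu> by simp
        hence "dist y (x0 + t *\<^sub>R (- \<nu>)) = R - t" using t by (simp add: dist_norm norm_minus_commute)
        hence "x0 + t *\<^sub>R (- \<nu>) \<in> ball y R" using t by simp
        thus "x0 + t *\<^sub>R (- \<nu>) \<in> closure \<Omega>" using By closure_subset by blast
        show "- I (x0 + t *\<^sub>R (- \<nu>)) \<le> - I x0 - \<kappa> * t" using kt(3) t e Ix0 by auto
      qed
      have "- D (- \<nu>) \<le> - \<kappa>" using deriv_dir_bound[OF Dm _ seg] kt R0 by simp
      moreover have "linear D" using Dd has_derivative_linear by blast
      hence "D (- \<nu>) = - D \<nu>" by (simp add: linear_neg)
      moreover have "D \<nu> = 0" using bc fx0 by (simp add: D_def \<nu>_def normal_deriv_def)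
      ultimately show False using kt by simp
    qed
  qed
qed



theorem lemma5p1:
  fixes \<Omega> :: "'a::euclidean_space set" and \<phi> \<beta> \<gamma> S I :: "'a \<Rightarrow> real"
    and dS dI N p q :: real
  assumes dom: "smooth_bounded_domain \<Omega> \<phi>"
    and beta: "\<forall>x\<in>closure \<Omega>. \<beta> x > 0" "holder_continuous_on (closure \<Omega>) \<beta>"
    and gamma: "\<forall>x\<in>closure \<Omega>. \<gamma> x > 0" "holder_continuous_on (closure \<Omega>) \<gamma>"
    and N: "N > 0" and d: "dS > 0" "dI > 0"
    and p: "0 < p" "p < 1" and q: "q > 0"
    and EE: "endemic_equilibrium \<Omega> \<phi> dS dI \<beta> \<gamma> N p q S I"
  shows "fmax \<Omega> I \<le> (fmax \<Omega> (\<lambda>x. \<beta> x / \<gamma> x) * fmax \<Omega> S powr q) powr (1 / (1 - p)) \<and>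
         fmax \<Omega> S \<le> (fmax \<Omega> (\<lambda>x. \<gamma> x / \<beta> x) * fmax \<Omega> I powr (1 - p)) powr (1 / q)"
proof -
  have S2: "Ck_on 2 \<Omega> S" and I2: "Ck_on 2 \<Omega> I" and S1: "C1_closure \<Omega> S" and I1: "C1_closure \<Omega> I"
    and nn: "\<forall>x\<in>closure \<Omega>. S x \<ge> 0 \<and> I x \<ge> 0" and nz: "\<exists>x\<in>closure \<Omega>. I x \<noteq> 0"
    and eqS: "\<forall>x\<in>\<Omega>. dS * laplacian S x - \<beta> x * S x powr q * I x powr p + \<gamma> x * I x = 0"
    and eqI: "\<forall>x\<in>\<Omega>. dI * laplacian I x + \<beta> x * S x powr q * I x powr p - \<gamma> x * I x = 0"
    and bc: "\<forall>x\<in>frontier \<Omega>. normal_deriv \<Omega> \<phi> S x = 0 \<and> normal_deriv \<Omega> \<phi> I x = 0"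
    using EE unfolding endemic_equilibrium_def by blast+
  have bnd: "bounded \<Omega>" and ne: "\<Omega> \<noteq> {}"
    using dom unfolding smooth_bounded_domain_def by blast+
  have Sc: "continuous_on (closure \<Omega>) S" using C1_closure_cont[OF S1] .
  have Ic: "continuous_on (closure \<Omega>) I" using C1_closure_cont[OF I1] .
  have bc': "continuous_on (closure \<Omega>) \<beta>" using holder_cont[OF beta(2)] .
  have gc: "continuous_on (closure \<Omega>) \<gamma>" using holder_cont[OF gamma(2)] .
  have Sq: "continuous_on (closure \<Omega>) (\<lambda>x. S x powr q)"
    by (rule continuous_on_powr'[OF Sc continuous_on_const]) (use nn q in auto)
  have Ip: "continuous_on (closure \<Omega>) (\<lambda>x. I x powr p)"
    by (rule continuous_on_powr'[OF Ic continuous_on_const]) (use nn p in auto)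
  have bg: "continuous_on (closure \<Omega>) (\<lambda>x. \<beta> x / \<gamma> x)"
    using bc' gc gamma(1) by (intro continuous_on_divide) auto
  have gb: "continuous_on (closure \<Omega>) (\<lambda>x. \<gamma> x / \<beta> x)"
    using bc' gc beta(1) by (intro continuous_on_divide) auto
  obtain xg where xg: "xg \<in> closure \<Omega>" "\<gamma> xg = fmax \<Omega> \<gamma>" "\<forall>x\<in>closure \<Omega>. \<gamma> x \<le> fmax \<Omega> \<gamma>"
    using fmax_attained[OF bnd ne gc] by blast
  define c where "c = fmax \<Omega> \<gamma> / dI"
  have c: "c \<ge> 0" using xg gamma(1) d by (auto simp: c_def)
  have lapI: "\<forall>x\<in>\<Omega>. laplacian I x \<le> c * I x"
  proof
    fix x assume x: "x \<in> \<Omega>"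
    hence xc: "x \<in> closure \<Omega>" using closure_subset by blast
    have "dI * laplacian I x = \<gamma> x * I x - \<beta> x * S x powr q * I x powr p" using eqI x by (simp add: algebra_simps)
    moreover have "\<beta> x * S x powr q * I x powr p \<ge> 0"
    proof -
      have "\<beta> x > 0" using beta(1) xc by blast
      thus ?thesis by (intro mult_nonneg_nonneg) auto
    qed
    moreover have "\<gamma> x * I x \<le> fmax \<Omega> \<gamma> * I x" using xg(3) xc nn by (intro mult_right_mono) auto
    ultimately have "dI * laplacian I x \<le> fmax \<Omega> \<gamma> * I x" by linarith
    thus "laplacian I x \<le> c * I x" using d by (simp add: c_def field_simps)
  qed
  have Ipos: "\<forall>x\<in>closure \<Omega>. I x > 0"
    by (rule I_pos_closure[OF dom I2 I1 _ nz c lapI]) (use nn bc in auto)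
  obtain xI where xI: "xI \<in> closure \<Omega>" "I xI = fmax \<Omega> I" "\<forall>x\<in>closure \<Omega>. I x \<le> fmax \<Omega> I"
    using fmax_attained[OF bnd ne Ic] by blast
  obtain xS where xS: "xS \<in> closure \<Omega>" "S xS = fmax \<Omega> S" "\<forall>x\<in>closure \<Omega>. S x \<le> fmax \<Omega> S"
    using fmax_attained[OF bnd ne Sc] by blast
  obtain xB where xB: "xB \<in> closure \<Omega>" "\<forall>x\<in>closure \<Omega>. \<beta> x / \<gamma> x \<le> fmax \<Omega> (\<lambda>x. \<beta> x / \<gamma> x)"
    using fmax_attained[OF bnd ne bg] by blast
  obtain xR where xR: "xR \<in> closure \<Omega>" "\<forall>x\<in>closure \<Omega>. \<gamma> x / \<beta> x \<le> fmax \<Omega> (\<lambda>x. \<gamma> x / \<beta> x)"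
    using fmax_attained[OF bnd ne gb] by blast
  define Im where "Im = fmax \<Omega> I"
  define Sm where "Sm = fmax \<Omega> S"
  define Bm where "Bm = fmax \<Omega> (\<lambda>x. \<beta> x / \<gamma> x)"
  define Rm where "Rm = fmax \<Omega> (\<lambda>x. \<gamma> x / \<beta> x)"
  have Impos: "Im > 0" using Ipos xI by (auto simp: Im_def)
  have Sm0: "Sm \<ge> 0" using nn xS by (auto simp: Sm_def)
  have G1: "(\<gamma> xI * I xI - \<beta> xI * S xI powr q * I xI powr p) / dI \<le> 0"
  proof (rule max_principle_point[OF dom I2 I1 _ _ _ xI(1)])
    show "\<forall>x\<in>frontier \<Omega>. normal_deriv \<Omega> \<phi> I x = 0" using bc by blast
    show "continuous_on (closure \<Omega>) (\<lambda>x. (\<gamma> x * I x - \<beta> x * S x powr q * I x powr p) / dI)"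
      using gc Ic bc' Sq Ip d by (intro continuous_on_divide continuous_on_diff continuous_on_mult continuous_on_const) auto
    show "\<forall>x\<in>\<Omega>. laplacian I x = (\<gamma> x * I x - \<beta> x * S x powr q * I x powr p) / dI"
      using eqI d by (auto simp: field_simps)
    show "\<forall>x\<in>closure \<Omega>. I x \<le> I xI" using xI by simp
  qed
  have part1: "Im \<le> (Bm * Sm powr q) powr (1 / (1 - p))"
  proof -
    have gx: "\<gamma> xI > 0" "\<beta> xI > 0" using gamma(1) beta(1) xI by auto
    have "\<gamma> xI * Im \<le> \<beta> xI * S xI powr q * Im powr p" using G1 d xI by (simp add: Im_def divide_le_0_iff)
    moreover have "Im = Im powr (1 - p) * Im powr p" using Impos by (simp add: powr_add[symmetric])
    hence "\<gamma> xI * Im powr (1 - p) * Im powr p = \<gamma> xI * Im" by (simp add: mult.assoc)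
    ultimately have "\<gamma> xI * Im powr (1 - p) * Im powr p \<le> \<beta> xI * S xI powr q * Im powr p"
      by (metis mult.assoc)
    hence "\<gamma> xI * Im powr (1 - p) \<le> \<beta> xI * S xI powr q" using Impos by simp
    hence h1: "Im powr (1 - p) \<le> (\<beta> xI / \<gamma> xI) * S xI powr q" using gx by (simp add: field_simps)
    have "(\<beta> xI / \<gamma> xI) \<le> Bm" using xB xI by (simp add: Bm_def)
    moreover have "S xI powr q \<le> Sm powr q" using xS xI nn q by (intro powr_mono2) (auto simp: Sm_def)
    moreover have "\<beta> xI / \<gamma> xI \<ge> 0" using gx by simp
    ultimately have "(\<beta> xI / \<gamma> xI) * S xI powr q \<le> Bm * Sm powr q" by (intro mult_mono) auto
    hence h2: "Im powr (1 - p) \<le> Bm * Sm powr q" using h1 by linarith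
    have "(Im powr (1 - p)) powr (1 / (1 - p)) \<le> (Bm * Sm powr q) powr (1 / (1 - p))"
      using h2 p by (intro powr_mono2) auto
    moreover have "(Im powr (1 - p)) powr (1 / (1 - p)) = Im" using p Impos by (simp add: powr_powr)
    ultimately show ?thesis by simp
  qed
  have G2: "(\<beta> xS * S xS powr q * I xS powr p - \<gamma> xS * I xS) / dS \<le> 0"
  proof (rule max_principle_point[OF dom S2 S1 _ _ _ xS(1)])
    show "\<forall>x\<in>frontier \<Omega>. normal_deriv \<Omega> \<phi> S x = 0" using bc by blast
    show "continuous_on (closure \<Omega>) (\<lambda>x. (\<beta> x * S x powr q * I x powr p - \<gamma> x * I x) / dS)"
      using gc Ic bc' Sq Ip d by (intro continuous_on_divide continuous_on_diff continuous_on_mult continuous_on_const) auto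
    show "\<forall>x\<in>\<Omega>. laplacian S x = (\<beta> x * S x powr q * I x powr p - \<gamma> x * I x) / dS"
      using eqS d by (auto simp: field_simps)
    show "\<forall>x\<in>closure \<Omega>. S x \<le> S xS" using xS by simp
  qed
  have part2: "Sm \<le> (Rm * Im powr (1 - p)) powr (1 / q)"
  proof -
    have gx: "\<gamma> xS > 0" "\<beta> xS > 0" "I xS > 0" using gamma(1) beta(1) Ipos xS by auto
    have "\<beta> xS * Sm powr q * I xS powr p \<le> \<gamma> xS * I xS" using G2 d xS by (simp add: Sm_def divide_le_0_iff)
    moreover have "I xS = I xS powr (1 - p) * I xS powr p" using gx by (simp add: powr_add[symmetric])
    hence "\<gamma> xS * I xS powr (1 - p) * I xS powr p = \<gamma> xS * I xS" by (simp add: mult.assoc)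
    ultimately have "\<beta> xS * Sm powr q * I xS powr p \<le> \<gamma> xS * I xS powr (1 - p) * I xS powr p"
      by (metis mult.assoc)
    hence "\<beta> xS * Sm powr q \<le> \<gamma> xS * I xS powr (1 - p)" using gx by simp
    hence h1: "Sm powr q \<le> (\<gamma> xS / \<beta> xS) * I xS powr (1 - p)" using gx by (simp add: field_simps)
    have "(\<gamma> xS / \<beta> xS) \<le> Rm" using xR xS by (simp add: Rm_def)
    moreover have "I xS powr (1 - p) \<le> Im powr (1 - p)" using xI xS gx p by (intro powr_mono2) (auto simp: Im_def)
    moreover have "\<gamma> xS / \<beta> xS \<ge> 0" using gx by simp
    ultimately have "(\<gamma> xS / \<beta> xS) * I xS powr (1 - p) \<le> Rm * Im powr (1 - p)" by (intro mult_mono) auto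
    hence h2: "Sm powr q \<le> Rm * Im powr (1 - p)" using h1 by linarith
    have "(Sm powr q) powr (1 / q) \<le> (Rm * Im powr (1 - p)) powr (1 / q)"
      using h2 q by (intro powr_mono2) auto
    moreover have "(Sm powr q) powr (1 / q) = Sm" using q Sm0 by (simp add: powr_powr)
    ultimately show ?thesis by simp
  qed
  show ?thesis using part1 part2 by (simp add: Im_def Sm_def Bm_def Rm_def)
qed


end
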